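(* Let $\mathcal G_1$ and $\mathcal G_2$ be digraphs of two dynamic systems. Suppose $\mathcal G_2$ has a single input node $k_2^1$ and is structurally controllable; the structural controllability of $\mathcal G_1$ is unknown. Suppose there exists a directed path starting from some input node $k_1^1$ of $\mathcal G_1$ and ending at $k_2^1$. Form the graph consisting of: - the nodes of this path together with the nodes of $\mathcal G_2$; - the edges of the path together with the edges of $\mathcal G_2$; - a single input at the initial node $k_1^1$ of the path. Then this graph is structurally controllable.
   Context: A directed path is a sequence of edges where each edge's terminal node is the next edge's initial node, with no repeated nodes. For a digraph, $A=[a_{ij}]$ denotes the weight matrix, with $a_{ij}\ne 0$ iff there is an edge from $j$ to $i$; inputs at node $k$ correspond to columns $b\,\bm e_k$ of the input matrix $B$. A graph with designated input nodes is structurally controllable if there is a choice of nonzero values for its edge weights and input gains such that the resulting pair $(A,B)$ is controllable (equivalently, there is a controllable pair with the same zero/nonzero pattern as $(A,B)$). *)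

theory Defs
  imports Complex_Main
begin

text \<open>Digraphs on node sets of a type 'a. An edge (j, i) is an edge from node j to node i.\<close>

definition digraph :: "'a set \<Rightarrow> ('a \<times> 'a) set \<Rightarrow> bool" where
  "digraph V E \<longleftrightarrow> finite V \<and> E \<subseteq> V \<times> V"

definition weight_pattern :: "'a set \<Rightarrow> ('a \<times> 'a) set \<Rightarrow> ('a \<Rightarrow> 'a \<Rightarrow> real) \<Rightarrow> bool" where
  "weight_pattern V E A \<longleftrightarrow> (\<forall>i\<in>V. \<forall>j\<in>V. A i j \<noteq> 0 \<longleftrightarrow> (j, i) \<in> E)"

definition input_pattern :: "'a set \<Rightarrow> 'a set \<Rightarrow> ('a \<Rightarrow> 'a \<Rightarrow> real) \<Rightarrow> bool" where
  "input_pattern V K B \<longleftrightarrow> (\<forall>i\<in>V. \<forall>k\<in>K. B i k \<noteq> 0 \<longleftrightarrow> i = k)"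

definition mvec :: "'a set \<Rightarrow> ('a \<Rightarrow> 'a \<Rightarrow> real) \<Rightarrow> ('a \<Rightarrow> real) \<Rightarrow> ('a \<Rightarrow> real)" where
  "mvec V A x = (\<lambda>i. \<Sum>j\<in>V. A i j * x j)"

text \<open>Kalman rank condition: the columns of [B, AB, ..., A^(n-1) B] (n = |V|) span R^V.\<close>
definition controllable :: "'a set \<Rightarrow> 'a set \<Rightarrow> ('a \<Rightarrow> 'a \<Rightarrow> real) \<Rightarrow> ('a \<Rightarrow> 'a \<Rightarrow> real) \<Rightarrow> bool" where
  "controllable V K A B \<longleftrightarrow>
     (\<forall>x :: 'a \<Rightarrow> real. \<exists>c :: nat \<Rightarrow> 'a \<Rightarrow> real.
        \<forall>i\<in>V. x i = (\<Sum>t<card V. \<Sum>k\<in>K. c t k * ((mvec V A ^^ t) (\<lambda>l. B l k)) i))"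

definition structurally_controllable :: "'a set \<Rightarrow> ('a \<times> 'a) set \<Rightarrow> 'a set \<Rightarrow> bool" where
  "structurally_controllable V E K \<longleftrightarrow>
     (\<exists>A B. weight_pattern V E A \<and> input_pattern V K B \<and> controllable V K A B)"

definition path_edges :: "'a list \<Rightarrow> ('a \<times> 'a) set" where
  "path_edges ps = set (zip ps (tl ps))"

definition directed_path :: "'a list \<Rightarrow> bool" where
  "directed_path ps \<longleftrightarrow> ps \<noteq> [] \<and> distinct ps"

end

theory Submission
  imports Defs
begin

lemma sum_split_lt: "(\<Sum>t<m+(n::nat). f t) = (\<Sum>t<m. f t) + (\<Sum>s<n. f (m+s))"
  by (induction n) (simp_all add: add_ac)

lemma mvec_cong: "(\<And>j. j\<in>V \<Longrightarrow> f j = g j) \<Longrightarrow> mvec V A f = mvec V A g"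
  unfolding mvec_def by (intro ext sum.cong) auto

lemma path_edges_iff:
  "(a,b) \<in> path_edges ps \<longleftrightarrow> (\<exists>k. Suc k < length ps \<and> a = ps!k \<and> b = ps!Suc k)"
proof
  assume "(a,b) \<in> path_edges ps"
  then obtain i where "i < length ps - 1" "a = ps ! i" "b = ps ! Suc i"
    unfolding path_edges_def by (auto simp: set_zip nth_tl)
  then show "\<exists>k. Suc k < length ps \<and> a = ps!k \<and> b = ps!Suc k" by (intro exI[of _ i]) auto
next
  assume "\<exists>k. Suc k < length ps \<and> a = ps!k \<and> b = ps!Suc k"
  then obtain k where "Suc k < length ps" "a = ps!k" "b = ps!Suc k" by blast
  then show "(a,b) \<in> path_edges ps"
    unfolding path_edges_def set_zip by (auto simp: nth_tl intro!: exI[of _ k])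
qed

theorem theorem5:
  fixes V1 V2 :: "'a set" and E1 E2 :: "('a \<times> 'a) set" and K1 :: "'a set"
    and k2 :: 'a and ps :: "'a list"
  assumes "digraph V1 E1" and "K1 \<subseteq> V1"
    and "digraph V2 E2" and "k2 \<in> V2"
    and "V1 \<inter> V2 = {}"
    and "structurally_controllable V2 E2 {k2}"
    and "directed_path ps" and "hd ps \<in> K1" and "last ps = k2"
    and "\<forall>v\<in>set (butlast ps). v \<notin> V2"
  shows "structurally_controllable (set ps \<union> V2) (path_edges ps \<union> E2) {hd ps}"
proof -
  have ne: "ps \<noteq> []" and dist: "distinct ps" using assms(7) by (auto simp: directed_path_def)
  have fin2: "finite V2" and E2s: "E2 \<subseteq> V2 \<times> V2" using assms(3) by (auto simp: digraph_def)
  define m where "m = length ps - 1"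
  have lenm: "length ps = Suc m" using ne m_def by (cases ps) auto
  have psm: "ps ! m = k2" using assms(9) ne lenm by (simp add: last_conv_nth)
  have hd0: "hd ps = ps ! 0" using ne by (simp add: hd_conv_nth)
  have F1: "ps ! t \<notin> V2" if "t < m" for t
  proof -
    have "ps ! t = butlast ps ! t" using that lenm by (simp add: nth_butlast)
    moreover have "butlast ps ! t \<in> set (butlast ps)" using that lenm by simp
    ultimately show ?thesis using assms(10) by auto
  qed
  have F2: "a \<notin> V2" if "(a,b) \<in> path_edges ps" for a b
    using that F1 lenm by (auto simp: path_edges_iff)
  have nth_inj: "ps ! k = ps ! t \<longleftrightarrow> k = t" if "k < length ps" "t < length ps" for k t
    using dist that by (simp add: nth_eq_iff_index_eq)
  obtain A2 B2 where wp2: "weight_pattern V2 E2 A2" and ip2: "input_pattern V2 {k2} B2"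
    and c2: "controllable V2 {k2} A2 B2"
    using assms(6) by (auto simp: structurally_controllable_def)
  define b2 where "b2 = B2 k2 k2"
  have b2nz: "b2 \<noteq> 0" using ip2 assms(4) by (auto simp: input_pattern_def b2_def)
  have B2z: "B2 l k2 = (if l = k2 then b2 else 0)" if "l \<in> V2" for l
    using ip2 that assms(4) by (auto simp: input_pattern_def b2_def)
  define V where "V = set ps \<union> V2"
  have finV: "finite V" using fin2 V_def by simp
  define A where "A = (\<lambda>i j. if j \<in> V2 then (if i \<in> V2 then A2 i j else 0)
                         else (if (j,i) \<in> path_edges ps then 1 else (0::real)))"
  define B where "B = (\<lambda>i k::'a. if i = hd ps then b2 else 0)"
  define \<beta> where "\<beta> = (\<lambda>l. B l (hd ps))"
  define \<gamma> where "\<gamma> = (\<lambda>l. B2 l k2)"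
  have setps: "set ps = set (butlast ps) \<union> {k2}"
    using ne assms(9) by (metis append_butlast_last_id set_append empty_set list.simps(15) sup_bot.right_neutral)
  have cardV: "card V = m + card V2"
  proof -
    have "V = set (butlast ps) \<union> V2" using setps assms(4) V_def by auto
    moreover have "card (set (butlast ps)) = m"
      using dist lenm by (simp add: distinct_card distinct_butlast)
    moreover have "set (butlast ps) \<inter> V2 = {}" using assms(10) by auto
    ultimately show ?thesis using fin2 by (simp add: card_Un_disjoint)
  qed
  have L1: "\<forall>i\<in>V. (mvec V A ^^ t) \<beta> i = (if i = ps!t then b2 else 0)" if "t \<le> m" for t
    using that
  proof (induction t)
    case 0
    then show ?case by (simp add: \<beta>_def B_def hd0)
  next
    case (Suc t)
    have tm: "t < m" using Suc.prems by simp
    have "(mvec V A ^^ Suc t) \<beta> = mvec V A (\<lambda>l. if l = ps!t then b2 else 0)"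
      using Suc.IH tm by (simp, intro mvec_cong) auto
    moreover have "ps ! t \<in> V" using tm lenm V_def by simp
    moreover have "A i (ps!t) = (if i = ps ! Suc t then 1 else 0)" for i
    proof -
      have "(ps!t, i) \<in> path_edges ps \<longleftrightarrow> i = ps ! Suc t"
        using tm lenm nth_inj by (auto simp: path_edges_iff)
      then show ?thesis using F1[OF tm] by (simp add: A_def)
    qed
    ultimately show ?case
    proof (intro ballI)
      fix i assume h: "(mvec V A ^^ Suc t) \<beta> = mvec V A (\<lambda>l. if l = ps!t then b2 else 0)"
        "ps ! t \<in> V" "\<And>i. A i (ps!t) = (if i = ps ! Suc t then 1 else 0)"
      have "mvec V A (\<lambda>l. if l = ps!t then b2 else 0) i = (\<Sum>j\<in>V. if j = ps!t then A i (ps!t) * b2 else 0)"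
        unfolding mvec_def by (intro sum.cong) auto
      also have "\<dots> = A i (ps!t) * b2" using h(2) finV by (simp add: sum.delta')
      finally show "(mvec V A ^^ Suc t) \<beta> i = (if i = ps!Suc t then b2 else 0)" using h by simp
    qed
  qed
  have L2: "\<forall>i\<in>V. (mvec V A ^^ (m+s)) \<beta> i = (if i\<in>V2 then (mvec V2 A2 ^^ s) \<gamma> i else 0)" for s
  proof (induction s)
    case 0
    show ?case using L1[of m] psm B2z assms(4) by (auto simp: \<gamma>_def)
  next
    case (Suc s)
    define g where "g = (mvec V2 A2 ^^ s) \<gamma>"
    have "(mvec V A ^^ (m + Suc s)) \<beta> = mvec V A (\<lambda>l. if l \<in> V2 then g l else 0)"
      using Suc.IH by (simp, intro mvec_cong) (auto simp: g_def)
    moreover have "mvec V A (\<lambda>l. if l \<in> V2 then g l else 0) i = (\<Sum>j\<in>V2. A i j * g j)" for i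
    proof -
      have "mvec V A (\<lambda>l. if l \<in> V2 then g l else 0) i = (\<Sum>j\<in>V. if j \<in> V2 then A i j * g j else 0)"
        unfolding mvec_def by (intro sum.cong) auto
      also have "\<dots> = (\<Sum>j\<in>V \<inter> V2. A i j * g j)" using finV by (simp add: sum.inter_restrict)
      also have "V \<inter> V2 = V2" using V_def by auto
      finally show ?thesis .
    qed
    ultimately show ?case
    proof (intro ballI)
      fix i assume h: "(mvec V A ^^ (m + Suc s)) \<beta> = mvec V A (\<lambda>l. if l \<in> V2 then g l else 0)"
        "\<And>i. mvec V A (\<lambda>l. if l \<in> V2 then g l else 0) i = (\<Sum>j\<in>V2. A i j * g j)"
      have "(\<Sum>j\<in>V2. A i j * g j) = (if i \<in> V2 then (\<Sum>j\<in>V2. A2 i j * g j) else 0)"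
        unfolding A_def by (cases "i \<in> V2") (simp_all cong: sum.cong)
      also have "\<dots> = (if i \<in> V2 then (mvec V2 A2 ^^ Suc s) \<gamma> i else 0)"
        by (simp add: g_def mvec_def)
      finally show "(mvec V A ^^ (m + Suc s)) \<beta> i = (if i \<in> V2 then (mvec V2 A2 ^^ Suc s) \<gamma> i else 0)"
        using h(2)[of i] unfolding h(1) by simp
    qed
  qed
  have wp: "weight_pattern V (path_edges ps \<union> E2) A"
    unfolding weight_pattern_def
  proof (intro ballI)
    fix i j assume "i \<in> V" "j \<in> V"
    show "A i j \<noteq> 0 \<longleftrightarrow> (j, i) \<in> path_edges ps \<union> E2"
    proof (cases "j \<in> V2")
      case True
      then show ?thesis using F2[of j i] wp2 E2s by (auto simp: A_def weight_pattern_def)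
    next
      case False
      then show ?thesis using E2s by (auto simp: A_def)
    qed
  qed
  have ip: "input_pattern V {hd ps} B"
    using b2nz by (auto simp: input_pattern_def B_def)
  have ctr: "controllable V {hd ps} A B"
    unfolding controllable_def
  proof
    fix x :: "'a \<Rightarrow> real"
    obtain c2 where hc2': "\<forall>i\<in>V2. x i = (\<Sum>t<card V2. \<Sum>k\<in>{k2}. c2 t k * ((mvec V2 A2 ^^ t) (\<lambda>l. B2 l k)) i)"
      using c2 unfolding controllable_def by blast
    have hc2: "\<forall>i\<in>V2. x i = (\<Sum>t<card V2. c2 t k2 * ((mvec V2 A2 ^^ t) \<gamma>) i)"
      using hc2' by (simp only: \<gamma>_def sum.insert finite.emptyI empty_iff sum.empty add_0_right not_False_eq_True)
    define c where "c = (\<lambda>t (k::'a). if t < m then x (ps!t) / b2 else c2 (t-m) k2)"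
    show "\<exists>c. \<forall>i\<in>V. x i = (\<Sum>t<card V. \<Sum>k\<in>{hd ps}. c t k * ((mvec V A ^^ t) (\<lambda>l. B l k)) i)"
    proof (intro exI ballI)
      fix i assume iV: "i \<in> V"
      have S1: "(\<Sum>t<m. c t (hd ps) * (mvec V A ^^ t) \<beta> i)
              = (\<Sum>t<m. if i = ps!t then x i else 0)"
        using L1 iV b2nz by (intro sum.cong) (auto simp: c_def)
      have S2: "(\<Sum>s<card V2. c (m+s) (hd ps) * (mvec V A ^^ (m+s)) \<beta> i)
              = (\<Sum>s<card V2. if i \<in> V2 then c2 s k2 * (mvec V2 A2 ^^ s) \<gamma> i else 0)"
        using L2 iV by (intro sum.cong) (auto simp: c_def)
      have "(\<Sum>t<card V. \<Sum>k\<in>{hd ps}. c t k * ((mvec V A ^^ t) (\<lambda>l. B l k)) i)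
          = (\<Sum>t<m. c t (hd ps) * (mvec V A ^^ t) \<beta> i) + (\<Sum>s<card V2. c (m+s) (hd ps) * (mvec V A ^^ (m+s)) \<beta> i)"
        unfolding cardV \<beta>_def by (simp only: sum_split_lt sum.insert finite.emptyI empty_iff sum.empty add_0_right not_False_eq_True)
      also have "\<dots> = x i"
      proof (cases "i \<in> V2")
        case True
        have "(\<Sum>t<m. if i = ps!t then x i else 0) = 0"
          using F1 True by (intro sum.neutral) auto
        then show ?thesis using S1 S2 True hc2 by simp
      next
        case False
        then have "i \<in> set ps" using iV V_def by auto
        then obtain r where r: "r < length ps" "i = ps ! r" by (auto simp: in_set_conv_nth)
        have rm: "r < m" using r False psm assms(4) lenm by (cases "r = m") auto
        have "(\<Sum>t<m. if i = ps!t then x i else 0) = (\<Sum>t<m. if t = r then x i else 0)"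
          using r nth_inj lenm by (intro sum.cong) auto
        also have "\<dots> = x i" using rm by simp
        finally show ?thesis using S1 S2 False by simp
      qed
      finally show "x i = (\<Sum>t<card V. \<Sum>k\<in>{hd ps}. c t k * ((mvec V A ^^ t) (\<lambda>l. B l k)) i)" by simp
    qed
  qed
  show ?thesis unfolding structurally_controllable_def V_def[symmetric]
    using wp ip ctr by blast
qed

end
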